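(* Consider an edge-to-edge tiling of a surface in which every corner of every tile carries a positive real number (its angle), such that the angles at every vertex sum to $2\pi$. Suppose the number $k$ of distinct angle values occurring at degree $3$ vertices satisfies $1\le k\le 5$, and let $S$ be the set of angle combinations occurring at degree $3$ vertices. Then, after suitably naming these $k$ distinct values by $\alpha,\beta,\gamma,\delta,\epsilon$ (the first $k$ of these letters), there is a row $(N;O)$ in the following list with exactly $k$ letters such that $N\subseteq S\subseteq N\cup O$: $k=1$: $(\{\alpha^3\};\emptyset)$. $k=2$: $(\{\alpha\beta^2\};\emptyset)$. $k=3$: $(\{\alpha\beta\gamma\};\{\alpha^3\})$; $(\{\alpha\beta^2,\alpha^2\gamma\};\emptyset)$; $(\{\alpha\beta^2,\gamma^3\};\emptyset)$. $k=4$: $(\{\alpha\beta\gamma,\alpha\delta^2\};\{\beta^2\delta\})$; $(\{\alpha\beta\gamma,\alpha\delta^2\};\{\beta^3\})$; $(\{\alpha\beta\gamma,\alpha^2\delta\};\{\beta\delta^2\})$; $(\{\alpha\beta\gamma,\alpha^2\delta\};\{\beta^3\})$; $(\{\alpha\beta\gamma,\delta^3\};\emptyset)$; $(\{\alpha\beta^2,\gamma\delta^2\};\{\alpha^2\delta\})$; $(\{\alpha\beta^2,\alpha^2\gamma,\delta^3\};\emptyset)$. $k=5$: with $N=\{\alpha\beta\gamma,\alpha\delta\epsilon\}$: $O=\{\beta\delta^2,\beta^2\epsilon\}$, $\{\beta\delta^2,\gamma\epsilon^2,\alpha^3\}$, $\{\beta\delta^2,\gamma^2\epsilon\}$, $\{\beta\delta^2,\gamma^3\}$,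 or $\{\beta\delta^2,\epsilon^3\}$; with $N=\{\alpha\beta\gamma,\alpha\delta^2,\alpha^2\epsilon\}$: $O=\{\beta\epsilon^2\}$, $\{\beta^2\delta\}$, or $\{\beta^3\}$; with $N=\{\alpha\beta\gamma,\alpha\delta^2,\beta\epsilon^2\}$: $O=\{\alpha^2\epsilon\}$, $\{\gamma^2\delta\}$, or $\{\gamma^3\}$; with $N=\{\alpha\beta\gamma,\alpha\delta^2,\beta^2\epsilon\}$: $O=\{\gamma\epsilon^2\}$, $\{\gamma^2\delta\}$, or $\{\gamma^3\}$; with $N=\{\alpha\beta\gamma,\alpha\delta^2,\delta\epsilon^2\}$: $O=\{\beta^2\epsilon\}$ or $\{\beta^3\}$; with $N=\{\alpha\beta\gamma,\alpha\delta^2,\epsilon^3\}$: $O=\{\beta^2\delta\}$; with $N=\{\alpha\beta\gamma,\alpha^2\delta,\beta^2\epsilon\}$: $O=\{\alpha\epsilon^2\}$, $\{\gamma\delta^2\}$, or $\{\gamma^3\}$; with $N=\{\alpha\beta\gamma,\alpha^2\delta,\delta^2\epsilon\}$: $O=\{\beta^2\epsilon\}$ or $\{\beta^3\}$; with $N=\{\alpha\beta\gamma,\alpha^2\delta,\epsilon^3\}$: $O=\{\beta\delta^2\}$; with $N=\{\alpha\beta\gamma,\delta\epsilon^2\}$: $O=\{\alpha^3\}$; with $N=\{\alpha\beta^2,\gamma\delta^2,\alpha^2\epsilon\}$: $O=\{\beta\gamma^2\}$ or $\{\delta\epsilon^2\}$; with $N=\{\alpha\beta^2,\gamma\delta^2,\epsilon^3\}$: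 $O=\{\alpha^2\delta\}$.
   Context: An angle combination at a degree $3$ vertex is the multiset of the three angle values at its corners, written multiplicatively: e.g. $\alpha\beta^2$ denotes a degree $3$ vertex whose corners have angles $\alpha,\beta,\beta$, and $\alpha^3$ one whose three corners all have angle $\alpha$. The letters $\alpha,\beta,\gamma,\delta,\epsilon$ denote pairwise distinct real numbers. In each row, $N$ is the "necessary part" and $O$ the "optional part". *)

theory Defs
  imports Complex_Main "HOL-Library.Multiset"
begin

text \<open>Corners of tiles have type 'c; each corner lies at a vertex (vert c) and carries
  an angle (ang c).\<close>

definition corners_at :: "('c \<Rightarrow> 'v) \<Rightarrow> 'v \<Rightarrow> 'c set" where
  "corners_at vert v = {c. vert c = v}"

definition degree :: "('c \<Rightarrow> 'v) \<Rightarrow> 'v \<Rightarrow> nat" where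
  "degree vert v = card (corners_at vert v)"

definition angle_comb :: "('c \<Rightarrow> 'v) \<Rightarrow> ('c \<Rightarrow> real) \<Rightarrow> 'v \<Rightarrow> real multiset" where
  "angle_comb vert ang v = image_mset ang (mset_set (corners_at vert v))"

definition deg3_combos :: "('c \<Rightarrow> 'v) \<Rightarrow> ('c \<Rightarrow> real) \<Rightarrow> real multiset set" where
  "deg3_combos vert ang = angle_comb vert ang ` {v \<in> range vert. degree vert v = 3}"

definition deg3_values :: "('c \<Rightarrow> 'v) \<Rightarrow> ('c \<Rightarrow> real) \<Rightarrow> real set" where
  "deg3_values vert ang = (\<Union>M \<in> deg3_combos vert ang. set_mset M)"

text \<open>Letters alpha, beta, gamma, delta, epsilon are encoded as 0,1,2,3,4.
  A row is (k, N, O): number of letters, necessary part, optional part.\<close>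

abbreviation (input) a3 :: "nat \<Rightarrow> nat \<Rightarrow> nat \<Rightarrow> nat multiset" where
  "a3 x y z \<equiv> {#x, y, z#}"

definition rows :: "(nat \<times> nat multiset set \<times> nat multiset set) list" where
  "rows = [
   (1, {a3 0 0 0}, {}),
   (2, {a3 0 1 1}, {}),
   (3, {a3 0 1 2}, {a3 0 0 0}),
   (3, {a3 0 1 1, a3 0 0 2}, {}),
   (3, {a3 0 1 1, a3 2 2 2}, {}),
   (4, {a3 0 1 2, a3 0 3 3}, {a3 1 1 3}),
   (4, {a3 0 1 2, a3 0 3 3}, {a3 1 1 1}),
   (4, {a3 0 1 2, a3 0 0 3}, {a3 1 3 3}),
   (4, {a3 0 1 2, a3 0 0 3}, {a3 1 1 1}),
   (4, {a3 0 1 2, a3 3 3 3}, {}),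
   (4, {a3 0 1 1, a3 2 3 3}, {a3 0 0 3}),
   (4, {a3 0 1 1, a3 0 0 2, a3 3 3 3}, {}),
   (5, {a3 0 1 2, a3 0 3 4}, {a3 1 3 3, a3 1 1 4}),
   (5, {a3 0 1 2, a3 0 3 4}, {a3 1 3 3, a3 2 4 4, a3 0 0 0}),
   (5, {a3 0 1 2, a3 0 3 4}, {a3 1 3 3, a3 2 2 4}),
   (5, {a3 0 1 2, a3 0 3 4}, {a3 1 3 3, a3 2 2 2}),
   (5, {a3 0 1 2, a3 0 3 4}, {a3 1 3 3, a3 4 4 4}),
   (5, {a3 0 1 2, a3 0 3 3, a3 0 0 4}, {a3 1 4 4}),
   (5, {a3 0 1 2, a3 0 3 3, a3 0 0 4}, {a3 1 1 3}),
   (5, {a3 0 1 2, a3 0 3 3, a3 0 0 4}, {a3 1 1 1}),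
   (5, {a3 0 1 2, a3 0 3 3, a3 1 4 4}, {a3 0 0 4}),
   (5, {a3 0 1 2, a3 0 3 3, a3 1 4 4}, {a3 2 2 3}),
   (5, {a3 0 1 2, a3 0 3 3, a3 1 4 4}, {a3 2 2 2}),
   (5, {a3 0 1 2, a3 0 3 3, a3 1 1 4}, {a3 2 4 4}),
   (5, {a3 0 1 2, a3 0 3 3, a3 1 1 4}, {a3 2 2 3}),
   (5, {a3 0 1 2, a3 0 3 3, a3 1 1 4}, {a3 2 2 2}),
   (5, {a3 0 1 2, a3 0 3 3, a3 3 4 4}, {a3 1 1 4}),
   (5, {a3 0 1 2, a3 0 3 3, a3 3 4 4}, {a3 1 1 1}),
   (5, {a3 0 1 2, a3 0 3 3, a3 4 4 4}, {a3 1 1 3}),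
   (5, {a3 0 1 2, a3 0 0 3, a3 1 1 4}, {a3 0 4 4}),
   (5, {a3 0 1 2, a3 0 0 3, a3 1 1 4}, {a3 2 3 3}),
   (5, {a3 0 1 2, a3 0 0 3, a3 1 1 4}, {a3 2 2 2}),
   (5, {a3 0 1 2, a3 0 0 3, a3 3 3 4}, {a3 1 1 4}),
   (5, {a3 0 1 2, a3 0 0 3, a3 3 3 4}, {a3 1 1 1}),
   (5, {a3 0 1 2, a3 0 0 3, a3 4 4 4}, {a3 1 3 3}),
   (5, {a3 0 1 2, a3 3 4 4}, {a3 0 0 0}),
   (5, {a3 0 1 1, a3 2 3 3, a3 0 0 4}, {a3 1 2 2}),
   (5, {a3 0 1 1, a3 2 3 3, a3 0 0 4}, {a3 3 4 4}),
   (5, {a3 0 1 1, a3 2 3 3, a3 4 4 4}, {a3 0 0 3})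
  ]"

end

theory Submission
  imports Defs
begin

type_synonym tri = "nat \<times> nat \<times> nat"

definition combos :: "nat \<Rightarrow> tri list" where
  "combos k = concat (map (\<lambda>a. concat (map (\<lambda>b. map (\<lambda>c. (a,b,c)) [b..<k]) [a..<k])) [0..<k])"

fun incomp :: "tri \<Rightarrow> tri \<Rightarrow> bool" where
  "incomp (a,b,c) (a',b',c') = (\<not>(a\<le>a' \<and> b\<le>b' \<and> c\<le>c') \<and> \<not>(a'\<le>a \<and> b'\<le>b \<and> c'\<le>c))"

fun sort3 :: "tri \<Rightarrow> tri" where
  "sort3 (a,b,c) = (if a \<le> b then (if b \<le> c then (a,b,c) else if a \<le> c then (a,c,b) else (c,a,b))
                    else (if a \<le> c then (b,a,c) else if b \<le> c then (b,c,a) else (c,b,a)))"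

fun mapq :: "nat list \<Rightarrow> tri \<Rightarrow> tri" where
  "mapq q (a,b,c) = (q!a, q!b, q!c)"

declare sort3.simps[simp del] mapq.simps[simp del]

fun tm :: "tri \<Rightarrow> nat multiset" where
  "tm (a,b,c) = {#a,b,c#}"

definition rowsT :: "(nat \<times> tri list \<times> tri list) list" where
  "rowsT = [(1, [(0,0,0)], []),
    (2, [(0,1,1)], []),
    (3, [(0,1,2)], [(0,0,0)]),
    (3, [(0,1,1),(0,0,2)], []),
    (3, [(0,1,1),(2,2,2)], []),
    (4, [(0,1,2),(0,3,3)], [(1,1,3)]),
    (4, [(0,1,2),(0,3,3)], [(1,1,1)]),
    (4, [(0,1,2),(0,0,3)], [(1,3,3)]),
    (4, [(0,1,2),(0,0,3)], [(1,1,1)]),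
    (4, [(0,1,2),(3,3,3)], []),
    (4, [(0,1,1),(2,3,3)], [(0,0,3)]),
    (4, [(0,1,1),(0,0,2),(3,3,3)], []),
    (5, [(0,1,2),(0,3,4)], [(1,3,3),(1,1,4)]),
    (5, [(0,1,2),(0,3,4)], [(1,3,3),(2,4,4),(0,0,0)]),
    (5, [(0,1,2),(0,3,4)], [(1,3,3),(2,2,4)]),
    (5, [(0,1,2),(0,3,4)], [(1,3,3),(2,2,2)]),
    (5, [(0,1,2),(0,3,4)], [(1,3,3),(4,4,4)]),
    (5, [(0,1,2),(0,3,3),(0,0,4)], [(1,4,4)]),
    (5, [(0,1,2),(0,3,3),(0,0,4)], [(1,1,3)]),
    (5, [(0,1,2),(0,3,3),(0,0,4)], [(1,1,1)]),
    (5, [(0,1,2),(0,3,3),(1,4,4)], [(0,0,4)]),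
    (5, [(0,1,2),(0,3,3),(1,4,4)], [(2,2,3)]),
    (5, [(0,1,2),(0,3,3),(1,4,4)], [(2,2,2)]),
    (5, [(0,1,2),(0,3,3),(1,1,4)], [(2,4,4)]),
    (5, [(0,1,2),(0,3,3),(1,1,4)], [(2,2,3)]),
    (5, [(0,1,2),(0,3,3),(1,1,4)], [(2,2,2)]),
    (5, [(0,1,2),(0,3,3),(3,4,4)], [(1,1,4)]),
    (5, [(0,1,2),(0,3,3),(3,4,4)], [(1,1,1)]),
    (5, [(0,1,2),(0,3,3),(4,4,4)], [(1,1,3)]),
    (5, [(0,1,2),(0,0,3),(1,1,4)], [(0,4,4)]),
    (5, [(0,1,2),(0,0,3),(1,1,4)], [(2,3,3)]),
    (5, [(0,1,2),(0,0,3),(1,1,4)], [(2,2,2)]),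
    (5, [(0,1,2),(0,0,3),(3,3,4)], [(1,1,4)]),
    (5, [(0,1,2),(0,0,3),(3,3,4)], [(1,1,1)]),
    (5, [(0,1,2),(0,0,3),(4,4,4)], [(1,3,3)]),
    (5, [(0,1,2),(3,4,4)], [(0,0,0)]),
    (5, [(0,1,1),(2,3,3),(0,0,4)], [(1,2,2)]),
    (5, [(0,1,1),(2,3,3),(0,0,4)], [(3,4,4)]),
    (5, [(0,1,1),(2,3,3),(4,4,4)], [(0,0,3)])]"

definition goodtab1 :: "(tri list \<times> nat \<times> nat list) list" where
  "goodtab1 = [([(0,0,0)], 0, [0])]"

definition goodtab2 :: "(tri list \<times> nat \<times> nat list) list" where
  "goodtab2 = [([(0,1,1)], 1, [0,1]),
    ([(0,0,1)], 1, [1,0])]"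

definition goodtab3 :: "(tri list \<times> nat \<times> nat list) list" where
  "goodtab3 = [([(1,1,2),(0,2,2)], 3, [2,1,0]),
    ([(1,1,1),(0,2,2)], 4, [0,2,1]),
    ([(0,1,2)], 2, [0,1,2]),
    ([(1,1,1),(0,1,2)], 2, [1,0,2]),
    ([(1,1,1),(0,0,2)], 4, [2,0,1]),
    ([(0,1,1),(0,0,2)], 3, [0,1,2])]"

definition goodtab4 :: "(tri list \<times> nat \<times> nat list) list" where
  "goodtab4 = [([(1,2,3),(0,3,3)], 7, [3,1,2,0]),
    ([(2,2,2),(1,2,3),(0,3,3)], 8, [3,2,1,0]),
    ([(1,2,2),(0,3,3)], 10, [0,3,1,2]),
    ([(2,2,2),(1,1,3),(0,3,3)], 11, [3,1,0,2]),
    ([(1,2,2),(1,1,3),(0,3,3)], 10, [1,2,0,3]),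
    ([(1,1,2),(0,3,3)], 10, [0,3,2,1]),
    ([(1,2,2),(0,2,3)], 7, [2,0,3,1]),
    ([(1,1,3),(0,2,3)], 5, [3,0,2,1]),
    ([(2,2,2),(1,1,3),(0,2,3)], 6, [3,2,0,1]),
    ([(1,2,2),(1,1,3),(0,2,3)], 5, [3,2,0,1]),
    ([(1,1,2),(0,2,3)], 5, [2,0,3,1]),
    ([(1,1,1),(0,2,3)], 9, [0,2,3,1]),
    ([(1,1,3),(0,2,2)], 10, [0,2,3,1]),
    ([(2,2,2),(0,1,3)], 9, [0,1,3,2]),
    ([(1,2,2),(0,1,3)], 5, [1,0,3,2]),
    ([(1,1,2),(0,1,3)], 7, [1,0,3,2]),
    ([(0,2,2),(0,1,3)], 5, [0,1,3,2]),
    ([(1,1,2),(0,2,2),(0,1,3)], 5, [0,1,3,2]),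
    ([(1,1,1),(0,2,2),(0,1,3)], 6, [0,1,3,2]),
    ([(1,2,2),(0,0,3)], 10, [1,2,3,0]),
    ([(1,1,2),(0,0,3)], 10, [2,1,3,0]),
    ([(1,1,2),(0,2,2),(0,0,3)], 10, [2,1,3,0]),
    ([(1,1,1),(0,2,2),(0,0,3)], 11, [0,2,3,1]),
    ([(0,1,2),(0,0,3)], 7, [0,1,2,3]),
    ([(1,1,1),(0,1,2),(0,0,3)], 8, [0,1,2,3])]"

definition goodtab5 :: "(tri list \<times> nat \<times> nat list) list" where
  "goodtab5 = [([(2,3,3),(1,3,4),(0,4,4)], 29, [3,4,1,2,0]),
    ([(2,2,4),(1,3,4),(0,4,4)], 17, [4,1,3,2,0]),
    ([(3,3,3),(2,2,4),(1,3,4),(0,4,4)], 19, [4,3,1,2,0]),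
    ([(2,3,3),(2,2,4),(1,3,4),(0,4,4)], 18, [4,3,1,2,0]),
    ([(2,2,3),(1,3,4),(0,4,4)], 23, [3,4,1,2,0]),
    ([(2,2,2),(1,3,4),(0,4,4)], 34, [4,1,3,0,2]),
    ([(2,2,4),(1,3,3),(0,4,4)], 36, [4,2,1,3,0]),
    ([(2,2,3),(1,3,3),(0,4,4)], 36, [3,2,0,4,1]),
    ([(2,2,2),(1,3,3),(0,4,4)], 38, [0,4,1,3,2]),
    ([(3,3,3),(1,2,4),(0,4,4)], 34, [4,1,2,0,3]),
    ([(2,3,3),(1,2,4),(0,4,4)], 23, [2,4,1,3,0]),
    ([(2,2,3),(1,2,4),(0,4,4)], 29, [2,4,1,3,0]),
    ([(1,3,3),(1,2,4),(0,4,4)], 23, [1,4,2,3,0]),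
    ([(2,2,3),(1,3,3),(1,2,4),(0,4,4)], 24, [1,4,2,3,0]),
    ([(2,2,2),(1,3,3),(1,2,4),(0,4,4)], 25, [1,4,2,3,0]),
    ([(1,2,3),(0,4,4)], 35, [1,2,3,0,4]),
    ([(2,2,2),(1,2,3),(0,4,4)], 35, [2,1,3,0,4]),
    ([(2,3,3),(1,1,4),(0,4,4)], 36, [4,1,2,3,0]),
    ([(2,2,3),(1,1,4),(0,4,4)], 36, [4,1,3,2,0]),
    ([(2,2,3),(1,3,3),(1,1,4),(0,4,4)], 36, [4,1,3,2,0]),
    ([(2,2,2),(1,3,3),(1,1,4),(0,4,4)], 38, [1,3,0,4,2]),
    ([(1,2,3),(1,1,4),(0,4,4)], 32, [1,2,3,4,0]),
    ([(2,2,2),(1,2,3),(1,1,4),(0,4,4)], 33, [1,2,3,4,0]),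
    ([(2,2,2),(1,1,3),(0,4,4)], 38, [0,4,3,1,2]),
    ([(1,2,2),(1,1,3),(0,4,4)], 36, [1,2,0,4,3]),
    ([(2,2,4),(1,3,3),(0,3,4)], 23, [4,3,0,2,1]),
    ([(2,2,3),(1,3,3),(0,3,4)], 17, [3,0,4,2,1]),
    ([(2,2,2),(1,3,3),(0,3,4)], 34, [3,0,4,1,2]),
    ([(1,2,4),(0,3,4)], 12, [4,0,3,1,2]),
    ([(3,3,3),(1,2,4),(0,3,4)], 15, [4,0,3,1,2]),
    ([(2,3,3),(1,2,4),(0,3,4)], 12, [4,2,1,3,0]),
    ([(2,2,3),(1,2,4),(0,3,4)], 12, [4,2,1,0,3]),
    ([(2,2,2),(1,2,4),(0,3,4)], 15, [4,1,2,0,3]),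
    ([(1,3,3),(1,2,4),(0,3,4)], 12, [4,1,2,3,0]),
    ([(2,2,3),(1,3,3),(1,2,4),(0,3,4)], 12, [4,3,0,2,1]),
    ([(2,2,2),(1,3,3),(1,2,4),(0,3,4)], 15, [4,1,2,3,0]),
    ([(1,2,3),(0,3,4)], 12, [3,0,4,1,2]),
    ([(2,2,2),(1,2,3),(0,3,4)], 15, [3,1,2,0,4]),
    ([(1,2,2),(0,3,4)], 35, [0,3,4,1,2]),
    ([(2,3,3),(1,1,4),(0,3,4)], 23, [4,3,0,1,2]),
    ([(2,2,3),(1,1,4),(0,3,4)], 20, [3,4,0,2,1]),
    ([(2,2,2),(1,1,4),(0,3,4)], 28, [4,0,3,1,2]),
    ([(2,2,3),(1,3,3),(1,1,4),(0,3,4)], 17, [3,4,0,2,1]),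
    ([(2,2,2),(1,3,3),(1,1,4),(0,3,4)], 28, [4,3,0,1,2]),
    ([(1,2,3),(1,1,4),(0,3,4)], 12, [3,1,2,0,4]),
    ([(2,2,2),(1,2,3),(1,1,4),(0,3,4)], 16, [3,4,0,1,2]),
    ([(1,2,2),(1,1,4),(0,3,4)], 26, [4,0,3,1,2]),
    ([(2,2,2),(1,1,3),(0,3,4)], 28, [3,0,4,1,2]),
    ([(1,2,2),(1,1,3),(0,3,4)], 26, [3,0,4,1,2]),
    ([(1,1,2),(0,3,4)], 35, [0,3,4,2,1]),
    ([(1,2,4),(0,3,3)], 35, [1,2,4,0,3]),
    ([(2,2,3),(1,2,4),(0,3,3)], 32, [2,1,4,3,0]),
    ([(2,2,2),(1,2,4),(0,3,3)], 35, [2,1,4,0,3]),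
    ([(2,2,3),(1,1,4),(0,3,3)], 36, [3,2,4,1,0]),
    ([(2,2,2),(1,1,4),(0,3,3)], 38, [0,3,4,1,2]),
    ([(1,2,3),(1,1,4),(0,3,3)], 29, [1,3,2,4,0]),
    ([(2,2,2),(1,2,3),(1,1,4),(0,3,3)], 31, [1,3,2,4,0]),
    ([(1,2,2),(1,1,4),(0,3,3)], 36, [1,2,0,3,4]),
    ([(1,3,3),(0,2,4)], 35, [0,2,4,1,3]),
    ([(2,2,3),(1,3,3),(0,2,4)], 32, [2,0,4,3,1]),
    ([(2,2,2),(1,3,3),(0,2,4)], 35, [2,0,4,1,3]),
    ([(1,2,3),(0,2,4)], 12, [2,0,4,1,3]),
    ([(2,2,2),(1,2,3),(0,2,4)], 13, [2,0,4,1,3]),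
    ([(3,3,3),(1,1,4),(0,2,4)], 28, [4,0,2,1,3]),
    ([(2,3,3),(1,1,4),(0,2,4)], 20, [2,4,0,3,1]),
    ([(2,2,3),(1,1,4),(0,2,4)], 23, [4,2,0,1,3]),
    ([(1,3,3),(1,1,4),(0,2,4)], 26, [4,0,2,1,3]),
    ([(2,2,3),(1,3,3),(1,1,4),(0,2,4)], 26, [4,2,0,1,3]),
    ([(2,2,2),(1,3,3),(1,1,4),(0,2,4)], 27, [4,2,0,1,3]),
    ([(1,2,3),(1,1,4),(0,2,4)], 12, [2,1,3,0,4]),
    ([(2,2,2),(1,2,3),(1,1,4),(0,2,4)], 13, [2,0,4,3,1]),
    ([(1,1,3),(0,2,4)], 35, [0,2,4,3,1]),
    ([(2,2,2),(1,1,3),(0,2,4)], 35, [2,0,4,3,1]),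
    ([(1,2,2),(1,1,3),(0,2,4)], 32, [2,0,4,1,3]),
    ([(1,2,3),(0,3,3),(0,2,4)], 12, [2,0,4,3,1]),
    ([(2,2,2),(1,2,3),(0,3,3),(0,2,4)], 13, [2,0,4,3,1]),
    ([(1,2,2),(0,3,3),(0,2,4)], 23, [0,2,4,3,1]),
    ([(1,1,4),(0,3,3),(0,2,4)], 20, [0,4,2,3,1]),
    ([(2,2,3),(1,1,4),(0,3,3),(0,2,4)], 21, [0,4,2,3,1]),
    ([(2,2,2),(1,1,4),(0,3,3),(0,2,4)], 22, [0,4,2,3,1]),
    ([(1,2,3),(1,1,4),(0,3,3),(0,2,4)], 13, [2,0,4,3,1]),
    ([(2,2,2),(1,2,3),(1,1,4),(0,3,3),(0,2,4)], 13, [2,0,4,3,1]),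
    ([(1,2,2),(1,1,4),(0,3,3),(0,2,4)], 21, [4,0,2,1,3]),
    ([(1,1,3),(0,3,3),(0,2,4)], 26, [0,2,4,3,1]),
    ([(2,2,2),(1,1,3),(0,3,3),(0,2,4)], 27, [0,2,4,3,1]),
    ([(1,2,2),(1,1,3),(0,3,3),(0,2,4)], 26, [0,2,4,3,1]),
    ([(1,1,2),(0,3,3),(0,2,4)], 20, [0,2,4,3,1]),
    ([(1,1,1),(0,3,3),(0,2,4)], 28, [0,2,4,3,1]),
    ([(1,1,4),(0,2,3)], 35, [0,2,3,4,1]),
    ([(2,2,2),(1,1,4),(0,2,3)], 35, [2,0,3,4,1]),
    ([(1,2,2),(1,1,4),(0,2,3)], 32, [2,0,3,1,4]),
    ([(2,3,3),(0,1,4)], 35, [0,1,4,2,3]),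
    ([(2,2,3),(0,1,4)], 35, [0,1,4,3,2]),
    ([(2,2,3),(1,3,3),(0,1,4)], 26, [1,0,4,3,2]),
    ([(2,2,2),(1,3,3),(0,1,4)], 28, [1,0,4,3,2]),
    ([(1,2,3),(0,1,4)], 12, [1,0,4,2,3]),
    ([(2,2,2),(1,2,3),(0,1,4)], 15, [1,3,2,0,4]),
    ([(2,2,2),(1,1,3),(0,1,4)], 34, [1,0,4,3,2]),
    ([(1,2,2),(1,1,3),(0,1,4)], 17, [1,0,4,2,3]),
    ([(2,2,3),(0,3,3),(0,1,4)], 26, [0,1,4,3,2]),
    ([(2,2,2),(0,3,3),(0,1,4)], 28, [0,1,4,3,2]),
    ([(1,2,3),(0,3,3),(0,1,4)], 12, [1,0,4,3,2]),
    ([(2,2,2),(1,2,3),(0,3,3),(0,1,4)], 16, [1,0,4,3,2]),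
    ([(1,2,2),(0,3,3),(0,1,4)], 20, [0,1,4,3,2]),
    ([(2,2,2),(1,1,3),(0,3,3),(0,1,4)], 28, [0,1,4,3,2]),
    ([(1,2,2),(1,1,3),(0,3,3),(0,1,4)], 17, [1,0,4,2,3]),
    ([(1,1,2),(0,3,3),(0,1,4)], 23, [0,1,4,3,2]),
    ([(0,2,3),(0,1,4)], 12, [0,1,4,2,3]),
    ([(2,2,2),(0,2,3),(0,1,4)], 15, [0,3,2,1,4]),
    ([(1,2,2),(0,2,3),(0,1,4)], 12, [0,1,4,2,3]),
    ([(1,1,3),(0,2,3),(0,1,4)], 12, [0,1,4,2,3]),
    ([(2,2,2),(1,1,3),(0,2,3),(0,1,4)], 15, [0,3,2,1,4]),
    ([(1,2,2),(1,1,3),(0,2,3),(0,1,4)], 12, [0,1,4,2,3]),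
    ([(1,1,2),(0,2,3),(0,1,4)], 12, [0,1,4,3,2]),
    ([(1,1,1),(0,2,3),(0,1,4)], 15, [0,4,1,2,3]),
    ([(1,1,3),(0,2,2),(0,1,4)], 23, [0,1,4,2,3]),
    ([(2,2,3),(1,3,3),(0,0,4)], 36, [3,2,4,0,1]),
    ([(2,2,2),(1,3,3),(0,0,4)], 38, [1,3,4,0,2]),
    ([(1,2,3),(0,0,4)], 35, [1,2,3,4,0]),
    ([(2,2,2),(1,2,3),(0,0,4)], 35, [2,1,3,4,0]),
    ([(2,2,2),(1,1,3),(0,0,4)], 38, [3,1,4,0,2]),
    ([(1,2,2),(1,1,3),(0,0,4)], 36, [1,2,4,0,3]),
    ([(1,2,3),(0,3,3),(0,0,4)], 32, [3,1,2,0,4]),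
    ([(2,2,2),(1,2,3),(0,3,3),(0,0,4)], 33, [3,2,1,0,4]),
    ([(1,2,2),(0,3,3),(0,0,4)], 36, [0,3,1,2,4]),
    ([(2,2,2),(1,1,3),(0,3,3),(0,0,4)], 38, [3,1,4,0,2]),
    ([(1,2,2),(1,1,3),(0,3,3),(0,0,4)], 36, [0,3,1,2,4]),
    ([(1,1,2),(0,3,3),(0,0,4)], 36, [0,3,2,1,4]),
    ([(1,2,2),(0,2,3),(0,0,4)], 29, [0,2,3,4,1]),
    ([(1,1,3),(0,2,3),(0,0,4)], 23, [3,0,2,1,4]),
    ([(2,2,2),(1,1,3),(0,2,3),(0,0,4)], 25, [3,0,2,1,4]),
    ([(1,2,2),(1,1,3),(0,2,3),(0,0,4)], 24, [3,0,2,1,4]),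
    ([(1,1,2),(0,2,3),(0,0,4)], 23, [2,0,3,1,4]),
    ([(1,1,1),(0,2,3),(0,0,4)], 34, [0,2,3,4,1]),
    ([(1,1,3),(0,2,2),(0,0,4)], 36, [0,2,3,1,4]),
    ([(2,2,2),(0,1,3),(0,0,4)], 34, [0,1,3,4,2]),
    ([(1,2,2),(0,1,3),(0,0,4)], 23, [1,0,3,2,4]),
    ([(1,1,2),(0,1,3),(0,0,4)], 29, [0,1,3,4,2]),
    ([(0,2,2),(0,1,3),(0,0,4)], 17, [0,1,3,2,4]),
    ([(1,1,2),(0,2,2),(0,1,3),(0,0,4)], 18, [0,1,3,2,4]),
    ([(1,1,1),(0,2,2),(0,1,3),(0,0,4)], 19, [0,1,3,2,4])]"

definition goodtab :: "nat \<Rightarrow> (tri list \<times> nat \<times> nat list) list" where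
  "goodtab k = (if k = 1 then goodtab1 else if k = 2 then goodtab2 else if k = 3 then goodtab3 else if k = 4 then goodtab4 else goodtab5)"

definition allletters :: "nat \<Rightarrow> tri list \<Rightarrow> bool" where
  "allletters k S = list_all (\<lambda>i. list_ex (\<lambda>(a,b,c). i=a \<or> i=b \<or> i=c) S) [0..<k]"

fun collect :: "nat \<Rightarrow> tri list \<Rightarrow> tri list \<Rightarrow> tri list list" where
  "collect k [] S = (if allletters k S then [S] else [])"
| "collect k (c#cs) S = collect k cs S @ collect k (filter (incomp c) cs) (c#S)"

definition wit_ok :: "nat \<Rightarrow> tri list \<times> nat \<times> nat list \<Rightarrow> bool" where
  "wit_ok k e = (case e of (L,r,q) \<Rightarrow> r < length rowsT \<and>
     (case rowsT ! r of (k',N,Op) \<Rightarrow> k' = k \<and> distinct q \<and> set q = set [0..<k] \<and> length q = k \<and>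
        list_all (\<lambda>n. sort3 (mapq q n) \<in> set L) N \<and>
        list_all (\<lambda>t. list_ex (\<lambda>n. sort3 (mapq q n) = t) (N @ Op)) L))"

definition conv :: "nat \<times> tri list \<times> tri list \<Rightarrow> nat \<times> nat multiset set \<times> nat multiset set" where
  "conv e = (case e of (k,N,Op) \<Rightarrow> (k, tm ` set N, tm ` set Op))"

definition compcheck :: "nat \<Rightarrow> bool" where
  "compcheck k = (distinct (combos k) \<and> collect k (combos k) [] = map fst (goodtab k) \<and> list_all (wit_ok k) (goodtab k))"

lemma cc1: "compcheck 1" by code_simp
lemma cc2: "compcheck 2" by code_simp
lemma cc3: "compcheck 3" by code_simp
lemma cc4: "compcheck 4" by code_simp
lemma cc5: "compcheck 5" by code_simp

lemma compcheck: "1 \<le> k \<Longrightarrow> k \<le> 5 \<Longrightarrow> compcheck k"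
proof -
  assume "1 \<le> k" "k \<le> 5"
  then have "k = 1 \<or> k = 2 \<or> k = 3 \<or> k = 4 \<or> k = 5" by arith
  then show ?thesis using cc1 cc2 cc3 cc4 cc5 by auto
qed

lemma rows_conv: "rows = map conv rowsT"
  by (simp add: rows_def rowsT_def conv_def)


lemma mem_combos: "(a,b,c) \<in> set (combos k) \<longleftrightarrow> a \<le> b \<and> b \<le> c \<and> c < k"
  by (force simp: combos_def image_iff)

lemma tm_sort3: "tm (sort3 t) = tm t"
  by (cases t) (auto simp: add_mset_commute sort3.simps)

lemma sort3_in_combos: "a < k \<Longrightarrow> b < k \<Longrightarrow> c < k \<Longrightarrow> sort3 (a,b,c) \<in> set (combos k)"
  by (auto simp: mem_combos sort3.simps)

lemma collect_sound:
  "distinct cs \<Longrightarrow> A \<subseteq> set cs \<Longrightarrow> (\<forall>s\<in>A. \<forall>t\<in>A. s \<noteq> t \<longrightarrow> incomp s t) \<Longrightarrow>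
   allletters k (rev (filter (\<lambda>c. c \<in> A) cs) @ S) \<Longrightarrow>
   rev (filter (\<lambda>c. c \<in> A) cs) @ S \<in> set (collect k cs S)"
proof (induction k cs S arbitrary: A rule: collect.induct)
  case (1 k S)
  then show ?case by simp
next
  case (2 k c cs S)
  show ?case
  proof (cases "c \<in> A")
    case True
    let ?A = "A - {c}"
    have cn: "c \<notin> set cs" using "2.prems"(1) by simp
    have d: "distinct (filter (incomp c) cs)" using "2.prems"(1) by simp
    have sub: "?A \<subseteq> set (filter (incomp c) cs)"
      using "2.prems"(2,3) True by auto
    have ff: "filter (\<lambda>d. d \<in> ?A) (filter (incomp c) cs) = filter (\<lambda>d. d \<in> A) cs"
    proof -
      have "filter (\<lambda>d. d \<in> ?A) (filter (incomp c) cs) = filter (\<lambda>d. incomp c d \<and> d \<in> ?A) cs"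
        by (simp add: filter_filter conj_commute)
      also have "\<dots> = filter (\<lambda>d. d \<in> A) cs"
      proof (rule filter_cong[OF refl])
        fix d assume "d \<in> set cs"
        then show "(incomp c d \<and> d \<in> ?A) = (d \<in> A)"
          using cn "2.prems"(3) True by auto
      qed
      finally show ?thesis .
    qed
    have eq: "rev (filter (\<lambda>d. d \<in> A) (c#cs)) @ S = rev (filter (\<lambda>d. d \<in> ?A) (filter (incomp c) cs)) @ (c#S)"
      using True ff by simp
    have "rev (filter (\<lambda>d. d \<in> ?A) (filter (incomp c) cs)) @ (c#S) \<in> set (collect k (filter (incomp c) cs) (c#S))"
      apply (rule "2.IH"(2)[OF d sub])
      using "2.prems"(3) eq "2.prems"(4) by auto
    then show ?thesis using eq by simp
  next
    case False
    have "rev (filter (\<lambda>d. d \<in> A) cs) @ S \<in> set (collect k cs S)"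
      apply (rule "2.IH"(1))
      using "2.prems" False by auto
    then show ?thesis using False by simp
  qed
qed

lemma size3_decomp:
  assumes "size M = 3" shows "\<exists>p q r. M = {#p,q,r#}"
proof -
  from assms have "size M = Suc 2" by simp
  then obtain p N where N: "M = add_mset p N" using size_eq_Suc_imp_eq_union by blast
  then have "size N = Suc 1" using assms by simp
  then obtain q N2 where N2: "N = add_mset q N2" using size_eq_Suc_imp_eq_union by blast
  then have "size N2 = Suc 0" using assms N by simp
  then obtain r N3 where N3: "N2 = add_mset r N3" using size_eq_Suc_imp_eq_union by blast
  then have "N3 = {#}" using assms N N2 by simp
  then show ?thesis using N N2 N3 by (auto simp: add_mset_commute)
qed

lemma sum_lt3:
  fixes x :: "nat \<Rightarrow> real"
  assumes le: "\<And>i j. i \<le> j \<Longrightarrow> x i \<le> x j" and lt: "\<And>i j. i < j \<Longrightarrow> x i < x j"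
    and "a \<le> a'" "b \<le> b'" "c \<le> c'" "(a,b,c) \<noteq> (a',b',c')"
  shows "x a + x b + x c < x a' + x b' + x c'"
proof -
  have 1: "x a \<le> x a'" "x b \<le> x b'" "x c \<le> x c'" using assms by auto
  have "a < a' \<or> b < b' \<or> c < c'" using assms by auto
  then show ?thesis
  proof (elim disjE)
    assume "a < a'" then have "x a < x a'" by (rule lt) then show ?thesis using 1 by linarith
  next
    assume "b < b'" then have "x b < x b'" by (rule lt) then show ?thesis using 1 by linarith
  next
    assume "c < c'" then have "x c < x c'" by (rule lt) then show ?thesis using 1 by linarith
  qed
qed

theorem theorem1:
  fixes vert :: "'c \<Rightarrow> 'v" and ang :: "'c \<Rightarrow> real"
  assumes fin: "\<forall>v \<in> range vert. finite (corners_at vert v)"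
    and pos: "\<forall>c. ang c > 0"
    and vsum: "\<forall>v \<in> range vert. (\<Sum>c \<in> corners_at vert v. ang c) = 2 * pi"
    and k_lo: "1 \<le> card (deg3_values vert ang)"
    and k_hi: "card (deg3_values vert ang) \<le> 5"
  shows "\<exists>(k, N, Opt) \<in> set rows.
           k = card (deg3_values vert ang) \<and>
           (\<exists>f :: nat \<Rightarrow> real. bij_betw f {..<k} (deg3_values vert ang) \<and>
              image_mset f ` N \<subseteq> deg3_combos vert ang \<and>
              deg3_combos vert ang \<subseteq> image_mset f ` (N \<union> Opt))"
proof -
  define V where "V = deg3_values vert ang"
  define S where "S = deg3_combos vert ang"
  define k where "k = card V"
  have k1: "1 \<le> k" and k5: "k \<le> 5" using k_lo k_hi by (simp_all add: k_def V_def)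
  have finV: "finite V" using k1 card.infinite k_def by fastforce
  have Sprop: "size M = 3 \<and> sum_mset M = 2*pi \<and> (\<forall>y\<in>#M. y > 0)" if "M \<in> S" for M
  proof -
    from that obtain v where v: "v \<in> range vert" "degree vert v = 3" "M = angle_comb vert ang v"
      by (auto simp: S_def deg3_combos_def)
    let ?C = "corners_at vert v"
    have fC: "finite ?C" using fin v(1) by auto
    have cC: "card ?C = 3" using v(2) by (simp add: degree_def)
    have s: "sum ang ?C = 2*pi" using vsum v(1) by auto
    show ?thesis
      using v(3) cC fC s pos by (auto simp: angle_comb_def sum_unfold_sum_mset)
  qed
  have Vdef: "V = (\<Union>M\<in>S. set_mset M)" by (simp add: V_def S_def deg3_values_def)
  have Vpos: "\<forall>v\<in>V. v > 0" using Sprop Vdef by auto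
  define xs where "xs = sorted_list_of_set V"
  have lxs: "length xs = k" by (simp add: xs_def k_def)
  have sxs: "set xs = V" using finV by (simp add: xs_def)
  have strict: "sorted_wrt (<) xs"
    by (simp add: xs_def strict_sorted_iff)
  define x where "x i = (if i < k then xs!i else xs!(k-1) + real (i - (k-1)))" for i
  have xlt: "x i < x j" if "i < j" for i j
  proof -
    consider "j < k" | "i < k" "k \<le> j" | "k \<le> i" by linarith
    then show ?thesis
    proof cases
      case 1 then show ?thesis using sorted_wrt_nth_less[OF strict \<open>i<j\<close>] lxs \<open>i<j\<close> by (simp add: x_def)
    next
      case 2
      have "xs!i \<le> xs!(k-1)"
      proof (cases "i = k-1")
        case False
        then have "i < k-1" using 2 by linarith
        then show ?thesis using sorted_wrt_nth_less[OF strict, of i "k-1"] lxs k1 by simp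
      qed simp
      moreover have "real (j - (k-1)) \<ge> 1" using 2 k1 by simp
      ultimately show ?thesis using 2 by (simp add: x_def)
    next
      case 3
      then have "j - (k-1) > i - (k-1)" using \<open>i<j\<close> k1 by linarith
      then have "real (j - (k-1)) > real (i - (k-1))" by linarith
      then show ?thesis using 3 \<open>i<j\<close> by (simp add: x_def)
    qed
  qed
  have xle: "x i \<le> x j" if "i \<le> j" for i j
    using xlt[of i j] that by (cases "i = j") auto
  have xinj: "inj x"
    by (metis injI linorder_neq_iff order_less_irrefl xlt)
  have ximg: "x ` {..<k} = V"
  proof -
    have "x ` {..<k} = (\<lambda>i. xs!i) ` {..<length xs}" using lxs by (auto simp: x_def)
    also have "\<dots> = set xs" by (auto simp: set_conv_nth)
    finally show ?thesis using sxs by simp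
  qed
  have bijx: "bij_betw x {..<k} V"
    unfolding bij_betw_def using ximg inj_on_subset[OF xinj subset_UNIV] by simp
  define S' where "S' = {t \<in> set (combos k). image_mset x (tm t) \<in> S}"
  have S'sub: "S' \<subseteq> set (combos k)" by (auto simp: S'_def)
  have SS': "S = (\<lambda>t. image_mset x (tm t)) ` S'"
  proof
    show "(\<lambda>t. image_mset x (tm t)) ` S' \<subseteq> S" by (auto simp: S'_def)
  next
    show "S \<subseteq> (\<lambda>t. image_mset x (tm t)) ` S'"
    proof
      fix M assume M: "M \<in> S"
      then obtain p q r where Mpqr: "M = {#p,q,r#}" using Sprop size3_decomp by blast
      have "p \<in> V" "q \<in> V" "r \<in> V" using M Mpqr Vdef by (auto intro!: bexI[of _ M])
      then obtain a b c where abc: "a < k" "b < k" "c < k" "p = x a" "q = x b" "r = x c"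
        using ximg by (metis imageE lessThan_iff)
      let ?t = "sort3 (a,b,c)"
      have "image_mset x (tm ?t) = M" using abc Mpqr by (simp add: tm_sort3)
      moreover have "?t \<in> S'" using sort3_in_combos[OF abc(1-3)] M \<open>image_mset x (tm ?t) = M\<close>
        by (auto simp: S'_def)
      ultimately show "M \<in> (\<lambda>t. image_mset x (tm t)) ` S'" by force
    qed
  qed
  have sum2pi: "x a + x b + x c = 2*pi" if "(a,b,c) \<in> S'" for a b c
  proof -
    have "image_mset x (tm (a,b,c)) \<in> S" using that by (auto simp: S'_def)
    from Sprop[OF this] show ?thesis by (simp add: add.assoc)
  qed
  have anti: "\<forall>s\<in>S'. \<forall>t\<in>S'. s \<noteq> t \<longrightarrow> incomp s t"
  proof (intro ballI impI)
    fix s t assume st: "s \<in> S'" "t \<in> S'" "s \<noteq> t"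
    obtain a b c where s: "s = (a,b,c)" by (cases s) auto
    obtain a' b' c' where t: "t = (a',b',c')" by (cases t) auto
    have e1: "x a + x b + x c = 2*pi" using sum2pi st(1) s by simp
    have e2: "x a' + x b' + x c' = 2*pi" using sum2pi st(2) t by simp
    show "incomp s t"
    proof (rule ccontr)
      assume "\<not> incomp s t"
      then have "(a\<le>a' \<and> b\<le>b' \<and> c\<le>c') \<or> (a'\<le>a \<and> b'\<le>b \<and> c'\<le>c)" using s t apply simp by blast
      then show False
      proof
        assume h: "a\<le>a' \<and> b\<le>b' \<and> c\<le>c'"
        have "x a + x b + x c < x a' + x b' + x c'"
          using sum_lt3[of x a a' b b' c c'] xle xlt h st(3) s t by blast
        then show False using e1 e2 by simp
      next
        assume h: "a'\<le>a \<and> b'\<le>b \<and> c'\<le>c"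
        have "x a' + x b' + x c' < x a + x b + x c"
          using sum_lt3[of x a' a b' b c' c] xle xlt h st(3) s t by auto
        then show False using e1 e2 by simp
      qed
    qed
  qed
  define L0 where "L0 = rev (filter (\<lambda>c. c \<in> S') (combos k))"
  have setL0: "set L0 = S'" using S'sub by (auto simp: L0_def)
  have letters: "allletters k L0"
    unfolding allletters_def list_all_iff list_ex_iff
  proof
    fix i assume "i \<in> set [0..<k]"
    then have ik: "i < k" by simp
    then have "x i \<in> V" using ximg by auto
    then obtain M where M: "M \<in> S" "x i \<in># M" using Vdef by auto
    then obtain t where t: "t \<in> S'" "M = image_mset x (tm t)" using SS' by auto
    obtain a b c where abc: "t = (a,b,c)" by (cases t) auto
    have "x i = x a \<or> x i = x b \<or> x i = x c" using M t abc by auto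
    then have "i = a \<or> i = b \<or> i = c" using xinj by (auto dest: injD)
    then show "\<exists>y\<in>set L0. case y of (a, b, c) \<Rightarrow> i = a \<or> i = b \<or> i = c"
      using setL0 t abc by auto
  qed
  have cc: "compcheck k" using compcheck k1 k5 by blast
  then have dc: "distinct (combos k)" and ce: "collect k (combos k) [] = map fst (goodtab k)"
    and wl: "list_all (wit_ok k) (goodtab k)" by (simp_all add: compcheck_def)
  have "rev (filter (\<lambda>c. c \<in> S') (combos k)) @ [] \<in> set (collect k (combos k) [])"
    using collect_sound[OF dc S'sub anti, of k "[]"] letters by (simp add: L0_def)
  then have "L0 \<in> fst ` set (goodtab k)" using ce by (simp add: L0_def)
  then obtain r q where e: "(L0, r, q) \<in> set (goodtab k)" by force
  then have w: "wit_ok k (L0, r, q)" using wl by (simp add: list_all_iff)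
  obtain k' N Op where rr: "rowsT ! r = (k', N, Op)" by (cases "rowsT ! r") auto
  from w rr have rlen: "r < length rowsT" and kk: "k' = k" and dq: "distinct q"
    and sq: "set q = set [0..<k]" and lq: "length q = k"
    and W1: "\<forall>n\<in>set N. sort3 (mapq q n) \<in> set L0"
    and W2: "\<forall>t\<in>set L0. \<exists>n\<in>set (N @ Op). sort3 (mapq q n) = t"
    by (auto simp: wit_ok_def list_all_iff list_ex_iff)
  have mem: "(k, tm ` set N, tm ` set Op) \<in> set rows"
  proof -
    have "conv (rowsT ! r) \<in> set (map conv rowsT)" using rlen by simp
    then show ?thesis using rr kk by (simp add: rows_conv conv_def)
  qed
  define f where "f i = x (q!i)" for i
  have bijq: "bij_betw ((!) q) {..<k} {..<k}"
  proof -
    have sq': "set q = {..<k}" using sq by (simp add: atLeast0LessThan)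
    show ?thesis by (rule bij_betw_nth[OF dq]) (use lq sq' in auto)
  qed
  have bijf: "bij_betw f {..<k} V"
  proof -
    have "f = x \<circ> (!) q" by (auto simp: f_def)
    then show ?thesis using bij_betw_trans[OF bijq bijx] by simp
  qed
  have imf: "image_mset f (tm n) = image_mset x (tm (mapq q n))" for n
    by (cases n) (simp add: f_def mapq.simps)
  have A: "image_mset f ` (tm ` set N) \<subseteq> S"
  proof
    fix M assume "M \<in> image_mset f ` (tm ` set N)"
    then obtain n where n: "n \<in> set N" "M = image_mset f (tm n)" by auto
    have "sort3 (mapq q n) \<in> S'" using W1 n setL0 by auto
    then have "image_mset x (tm (sort3 (mapq q n))) \<in> S" by (auto simp: S'_def)
    then show "M \<in> S" using n imf tm_sort3 by simp
  qed
  have B: "S \<subseteq> image_mset f ` (tm ` set N \<union> tm ` set Op)"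
  proof
    fix M assume "M \<in> S"
    then obtain t where t: "t \<in> S'" "M = image_mset x (tm t)" using SS' by auto
    then obtain n where n: "n \<in> set (N @ Op)" "sort3 (mapq q n) = t" using W2 setL0 by blast
    have "M = image_mset f (tm n)" using t n imf tm_sort3 by metis
    then show "M \<in> image_mset f ` (tm ` set N \<union> tm ` set Op)" using n by auto
  qed
  show ?thesis
    apply (rule bexI[OF _ mem])
    using bijf A B by (auto simp: k_def V_def S_def)
qed

end
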